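(* There is a universal constant $C_{\mathrm{hg}}>1$ such that the following holds. Let $A$ be an $m_1\times m_2$ random matrix with i.i.d. Bernoulli$(p)$ entries, $p\in(0,1)$, let $\vec b=(b_1,\dots,b_{m_2})\in\{0,1,\dots,m_1\}^{m_2}$, and let $\Omega_{\vec b}(A)$ be the event that $|\mathrm{supp}(\mathbf C_i(A))|=b_i$ for all $i\in[m_2]$. Let $\emptyset\ne J_1\subset J_2\subset[m_2]$ and $r>0$ be such that $|\{j\in J_1:b_j\ge r\}|\ge|J_1|/2$ and $r\ge |J_2|\cdot\frac{24\|\vec b\|_\infty^2}{m_1}$. Then $$\mathbb{P}\Big\{|I_A(J_1,J_2)|<\frac{|J_1|r}{4}\ \Big|\ \Omega_{\vec b}(A)\Big\}\le C_{\mathrm{hg}}^{|J_1|/2}\exp\Big(-\log\Big(\frac{r}{24|J_2|\|\vec b\|_\infty^2/m_1}\Big)\frac{r|J_1|}{8}\Big).$$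
   Context: $\mathbf C_i(A)$ is the $i$-th column of $A$, $\mathrm{supp}$ the set of indices of nonzero entries, $\|\vec b\|_\infty=\max_i b_i$. For $J_1\subset J_2\subset[m_2]$, $I_A(J_1,J_2)=\{i\in[m_1]:\exists j_0\in J_1\text{ with }a_{ij_0}=1\text{ and }a_{ij}=0\text{ for all }j\in J_2\setminus\{j_0\}\}$. Conditioned on $\Omega_{\vec b}(A)$, the columns are independent and the support of column $i$ is uniform among $b_i$-subsets of $[m_1]$. *)

theory Defs
  imports "HOL-Probability.Probability"
begin

text \<open>An m1 x m2 0/1 matrix is a function on index pairs (row, column), rows {0..<m1},
  columns {0..<m2}; True means entry 1.\<close>

definition bern_matrix :: "nat \<Rightarrow> nat \<Rightarrow> real \<Rightarrow> (nat \<times> nat \<Rightarrow> bool) pmf" where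
  "bern_matrix m1 m2 p = Pi_pmf ({..<m1} \<times> {..<m2}) False (\<lambda>_. bernoulli_pmf p)"

definition col_supp :: "nat \<Rightarrow> (nat \<times> nat \<Rightarrow> bool) \<Rightarrow> nat \<Rightarrow> nat set" where
  "col_supp m1 A j = {i \<in> {..<m1}. A (i, j)}"

definition Omega_b :: "nat \<Rightarrow> nat \<Rightarrow> (nat \<Rightarrow> nat) \<Rightarrow> (nat \<times> nat \<Rightarrow> bool) set" where
  "Omega_b m1 m2 b = {A. \<forall>j<m2. card (col_supp m1 A j) = b j}"

definition I_A :: "nat \<Rightarrow> (nat \<times> nat \<Rightarrow> bool) \<Rightarrow> nat set \<Rightarrow> nat set \<Rightarrow> nat set" where
  "I_A m1 A J1 J2 = {i \<in> {..<m1}. \<exists>j0\<in>J1. A (i, j0) \<and> (\<forall>j\<in>J2 - {j0}. \<not> A (i, j))}"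

definition bnorm_inf :: "nat \<Rightarrow> (nat \<Rightarrow> nat) \<Rightarrow> nat" where
  "bnorm_inf m2 b = Max (b ` {..<m2})"

definition cond_prob :: "'a pmf \<Rightarrow> 'a set \<Rightarrow> 'a set \<Rightarrow> real" where
  "cond_prob P E F = measure_pmf.prob P (E \<inter> F) / measure_pmf.prob P F"

end

theory Submission
  imports Defs
begin


lemma binom_ratio:
  "r \<le> b \<Longrightarrow> b \<le> m \<Longrightarrow>
   real ((m - r) choose (b - r)) * real m ^ r \<le> real (m choose b) * real b ^ r"
proof (induction r arbitrary: m b)
  case 0 then show ?case by simp
next
  case (Suc r)
  obtain b' where b: "b = Suc b'" using Suc.prems by (cases b) auto
  obtain m' where m: "m = Suc m'" using Suc.prems by (cases m) auto
  have rb: "r \<le> b'" "b' \<le> m'" using Suc.prems b m by auto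
  have IH: "real ((m' - r) choose (b' - r)) * real m' ^ r \<le> real (m' choose b') * real b' ^ r"
    using Suc.IH rb by blast
  have k0: "(m choose b) * b = m * (m' choose b')"
    unfolding b m by (metis Suc_times_binomial_eq mult.commute)
  have key: "real (m choose b) * real b = real m * real (m' choose b')"
    by (metis k0 of_nat_mult)
  have eq: "(m - Suc r) choose (b - Suc r) = (m' - r) choose (b' - r)" using b m by simp
  show ?case
  proof (cases "b' = 0")
    case True
    then have "r = 0" using rb by simp
    then show ?thesis using key True b eq by simp
  next
    case False
    define Z where "Z = real ((m' - r) choose (b' - r))"
    have Z0: "Z \<ge> 0" unfolding Z_def by simp
    have mb: "real m * real b' \<le> real b * real m'" using rb b m by (simp add: algebra_simps)
    have "(real m * real b') ^ r \<le> (real b * real m') ^ r"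
      by (intro power_mono mb) simp
    then have "Z * real m ^ r * real b' ^ r \<le> Z * real m' ^ r * real b ^ r"
      using Z0 by (simp add: power_mult_distrib mult_left_mono mult.commute mult.left_commute)
    also have "\<dots> \<le> real (m' choose b') * real b' ^ r * real b ^ r"
      using IH Z0 unfolding Z_def by (intro mult_right_mono) auto
    finally have "Z * real m ^ r * real b' ^ r \<le> real (m' choose b') * real b ^ r * real b' ^ r"
      by (simp add: mult_ac)
    then have h: "Z * real m ^ r \<le> real (m' choose b') * real b ^ r"
      using False by (simp add: mult_le_cancel_right)
    have "Z * real m ^ Suc r = real m * (Z * real m ^ r)" by simp
    also have "\<dots> \<le> real m * (real (m' choose b') * real b ^ r)"
      using h by (intro mult_left_mono) auto
    also have "\<dots> = real (m choose b) * real b ^ Suc r" using key by (simp add: mult_ac)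
    finally show ?thesis using eq unfolding Z_def by simp
  qed
qed

lemma card_supersets:
  assumes "finite M" "R \<subseteq> M" "card R \<le> b"
  shows "card {X. X \<subseteq> M \<and> card X = b \<and> R \<subseteq> X} = (card M - card R) choose (b - card R)"
proof -
  have fR: "finite R" using assms finite_subset by blast
  have "bij_betw (\<lambda>X. X - R) {X. X \<subseteq> M \<and> card X = b \<and> R \<subseteq> X} {Y. Y \<subseteq> M - R \<and> card Y = b - card R}"
  proof (rule bij_betw_byWitness[where f'="\<lambda>Y. Y \<union> R"])
    show "\<forall>a\<in>{X. X \<subseteq> M \<and> card X = b \<and> R \<subseteq> X}. a - R \<union> R = a" by auto
    show "\<forall>a'\<in>{Y. Y \<subseteq> M - R \<and> card Y = b - card R}. a' \<union> R - R = a'" by auto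
    show "(\<lambda>X. X - R) ` {X. X \<subseteq> M \<and> card X = b \<and> R \<subseteq> X} \<subseteq> {Y. Y \<subseteq> M - R \<and> card Y = b - card R}"
      using fR by (auto simp: card_Diff_subset)
    show "(\<lambda>Y. Y \<union> R) ` {Y. Y \<subseteq> M - R \<and> card Y = b - card R} \<subseteq> {X. X \<subseteq> M \<and> card X = b \<and> R \<subseteq> X}"
    proof clarify
      fix Y assume Y: "Y \<subseteq> M - R" "card Y = b - card R"
      have "finite Y" using Y assms finite_subset by blast
      then have "card (Y \<union> R) = card Y + card R" using Y fR by (subst card_Un_disjoint) auto
      then show "Y \<union> R \<subseteq> M \<and> card (Y \<union> R) = b \<and> R \<subseteq> Y \<union> R" using Y assms by auto
    qed
  qed
  then have "card {X. X \<subseteq> M \<and> card X = b \<and> R \<subseteq> X} = card {Y. Y \<subseteq> M - R \<and> card Y = b - card R}"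
    by (rule bij_betw_same_card)
  also have "\<dots> = card (M - R) choose (b - card R)" using assms by (intro n_subsets) auto
  also have "card (M - R) = card M - card R" using assms fR by (simp add: card_Diff_subset)
  finally show ?thesis .
qed

lemma card_supersets_le:
  assumes "R \<subseteq> {..<m}" "b \<le> m"
  shows "real (card {X. X \<subseteq> {..<m} \<and> card X = b \<and> R \<subseteq> X}) \<le> real (m choose b) * (real b / real m) ^ card R"
proof (cases "card R \<le> b")
  case True
  have m0: "m > 0 \<or> (m = 0 \<and> b = 0)" using assms by auto
  have "real (card {X. X \<subseteq> {..<m} \<and> card X = b \<and> R \<subseteq> X}) = real ((m - card R) choose (b - card R))"
    using card_supersets[of "{..<m}" R b] True assms by simp
  also have "\<dots> \<le> real (m choose b) * (real b / real m) ^ card R"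
  proof (cases "m = 0")
    case True then show ?thesis using assms \<open>card R \<le> b\<close> by simp
  next
    case False
    have "real ((m - card R) choose (b - card R)) * real m ^ card R \<le> real (m choose b) * real b ^ card R"
      using binom_ratio True assms by blast
    then show ?thesis using False by (simp add: power_divide field_simps)
  qed
  finally show ?thesis .
next
  case False
  have e: "{X. X \<subseteq> {..<m} \<and> card X = b \<and> R \<subseteq> X} = {}"
    using False card_mono[of _ R] by (auto dest: finite_subset)
  show ?thesis unfolding e by simp
qed

lemma pow_as_sum:
  fixes y :: real
  assumes "finite Y"
  shows "(1 + y) ^ card Y = (\<Sum>R\<in>Pow Y. y ^ card R)"
  using prod_add[OF assms, of "\<lambda>_. y" "\<lambda>_. 1"] by (simp add: add.commute)

lemma col_mgf:
  fixes lam :: real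
  assumes "b \<le> m" "m > 0" "lam \<ge> 1"
  shows "(\<Sum>X \<in> {X. X \<subseteq> {..<m} \<and> card X = b}. lam ^ card (X \<inter> V))
         \<le> real (m choose b) * exp ((lam - 1) * real b * real (card (V \<inter> {..<m})) / real m)"
proof -
  define V' where "V' = V \<inter> {..<m}"
  define F where "F = {X. X \<subseteq> {..<m} \<and> card X = b}"
  define h where "h = (\<lambda>R::nat set. (lam - 1) ^ card R)"
  have fV: "finite V'" unfolding V'_def by simp
  have fF: "finite F" unfolding F_def by (rule finite_subset[of _ "Pow {..<m}"]) auto
  have fP: "finite (Pow V')" using fV by simp
  have "(\<Sum>X\<in>F. lam ^ card (X \<inter> V)) = (\<Sum>X\<in>F. \<Sum>R\<in>{R. R \<in> Pow V' \<and> R \<subseteq> X}. h R)"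
  proof (rule sum.cong[OF refl])
    fix X assume X: "X \<in> F"
    have e: "X \<inter> V = X \<inter> V'" using X unfolding F_def V'_def by auto
    have fX: "finite (X \<inter> V')" using fV by simp
    have "lam ^ card (X \<inter> V) = (1 + (lam - 1)) ^ card (X \<inter> V')" using e by simp
    also have "\<dots> = (\<Sum>R\<in>Pow (X \<inter> V'). h R)" unfolding h_def by (rule pow_as_sum[OF fX])
    also have "Pow (X \<inter> V') = {R. R \<in> Pow V' \<and> R \<subseteq> X}" by auto
    finally show "lam ^ card (X \<inter> V) = (\<Sum>R\<in>{R. R \<in> Pow V' \<and> R \<subseteq> X}. h R)" .
  qed
  also have "\<dots> = (\<Sum>R\<in>Pow V'. \<Sum>X\<in>{X. X \<in> F \<and> R \<subseteq> X}. h R)"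
    by (rule sum.swap_restrict[OF fF fP])
  also have "\<dots> = (\<Sum>R\<in>Pow V'. h R * real (card {X. X \<subseteq> {..<m} \<and> card X = b \<and> R \<subseteq> X}))"
    by (intro sum.cong refl) (simp add: F_def conj_assoc)
  also have "\<dots> \<le> (\<Sum>R\<in>Pow V'. h R * (real (m choose b) * (real b / real m) ^ card R))"
  proof (intro sum_mono mult_left_mono)
    fix R assume "R \<in> Pow V'"
    then show "real (card {X. X \<subseteq> {..<m} \<and> card X = b \<and> R \<subseteq> X}) \<le> real (m choose b) * (real b / real m) ^ card R"
      using card_supersets_le[of R m b] assms unfolding V'_def by auto
    show "0 \<le> h R" unfolding h_def using assms by simp
  qed
  also have "\<dots> = real (m choose b) * (\<Sum>R\<in>Pow V'. ((lam - 1) * (real b / real m)) ^ card R)"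
    unfolding h_def sum_distrib_left by (intro sum.cong refl) (simp add: power_mult_distrib[symmetric] mult_ac)
  also have "\<dots> = real (m choose b) * (1 + (lam - 1) * (real b / real m)) ^ card V'"
    by (simp add: pow_as_sum[OF fV])
  also have "\<dots> \<le> real (m choose b) * exp ((lam - 1) * (real b / real m)) ^ card V'"
    using assms by (intro mult_left_mono power_mono) auto
  also have "\<dots> = real (m choose b) * exp ((lam - 1) * real b * real (card V') / real m)"
    by (simp add: exp_of_nat_mult[symmetric] mult_ac)
  finally show ?thesis unfolding F_def V'_def .
qed


lemma sum_PiE_split:
  assumes "finite A" "c \<in> A"
  shows "(\<Sum>S\<in>PiE A T. f S) = (\<Sum>g\<in>PiE (A - {c}) T. \<Sum>y\<in>T c. f (g(c := y)))"
proof -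
  have A: "A = insert c (A - {c})" using assms by auto
  have "PiE A T = (\<lambda>(y, g). g(c := y)) ` (T c \<times> PiE (A - {c}) T)"
    by (subst A, rule PiE_insert_eq)
  moreover have "inj_on (\<lambda>(y, g). g(c := y)) (T c \<times> PiE (A - {c}) T)"
    by (rule inj_combinator) simp
  ultimately have "(\<Sum>S\<in>PiE A T. f S) = (\<Sum>(y, g)\<in>T c \<times> PiE (A - {c}) T. f (g(c := y)))"
    by (simp add: sum.reindex case_prod_unfold)
  also have "\<dots> = (\<Sum>y\<in>T c. \<Sum>g\<in>PiE (A - {c}) T. f (g(c := y)))"
    by (rule sum.cartesian_product[symmetric])
  also have "\<dots> = (\<Sum>g\<in>PiE (A - {c}) T. \<Sum>y\<in>T c. f (g(c := y)))"
    by (rule sum.swap)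
  finally show ?thesis .
qed

definition Vv :: "nat set \<Rightarrow> nat set \<Rightarrow> (nat \<Rightarrow> nat set) \<Rightarrow> nat \<Rightarrow> nat set" where
  "Vv J2 L S j = (\<Union>j'\<in>{j'\<in>J2. j' \<noteq> j \<and> (j' \<notin> L \<or> j' < j)}. S j')"

definition Dsum :: "nat set \<Rightarrow> nat set \<Rightarrow> nat set \<Rightarrow> (nat \<Rightarrow> nat set) \<Rightarrow> nat" where
  "Dsum J2 L K S = (\<Sum>j\<in>K. card (S j \<inter> Vv J2 L S j))"

lemma Vv_upd_self: "Vv J2 L (S(c := y)) c = Vv J2 L S c"
  unfolding Vv_def by (intro SUP_cong refl) simp

lemma Dsum_upd:
  assumes "c \<in> L" "\<forall>a\<in>K. a < c"
  shows "Dsum J2 L K (S(c := y)) = Dsum J2 L K S"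
  unfolding Dsum_def
proof (intro sum.cong refl)
  fix j assume j: "j \<in> K"
  then have "j \<noteq> c" "j < c" using assms by auto
  moreover have "Vv J2 L (S(c := y)) j = Vv J2 L S j"
    unfolding Vv_def using assms j by (intro SUP_cong refl) auto
  ultimately show "card ((S(c := y)) j \<inter> Vv J2 L (S(c := y)) j) = card (S j \<inter> Vv J2 L S j)"
    by simp
qed

lemma mgf_induct:
  fixes lam q :: real
  assumes fA: "finite A" and J2A: "J2 \<subseteq> A" and LJ2: "L \<subseteq> J2"
    and Fdef: "\<And>j. F j = {X. X \<subseteq> {..<m} \<and> card X = b j}"
    and bm: "\<And>j. j \<in> A \<Longrightarrow> b j \<le> m" and m0: "m > 0" and lam: "lam \<ge> 1"
    and qb: "\<And>S c. S \<in> PiE A F \<Longrightarrow> c \<in> L \<Longrightarrow>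
               real (b c) * real (card (Vv J2 L S c \<inter> {..<m})) / real m \<le> q"
    and fK: "finite K"
  shows "K \<subseteq> L \<Longrightarrow> (\<Sum>S\<in>PiE A F. lam ^ Dsum J2 L K S)
            \<le> exp (real (card K) * (lam - 1) * q) * real (card (PiE A F))"
  using fK
proof (induction K rule: finite_linorder_max_induct)
  case empty
  then show ?case by (simp add: Dsum_def)
next
  case (insert c K)
  have cL: "c \<in> L" using insert by auto
  have cA: "c \<in> A" using cL LJ2 J2A by auto
  have cK: "c \<notin> K" using insert by auto
  have IH: "(\<Sum>S\<in>PiE A F. lam ^ Dsum J2 L K S) \<le> exp (real (card K) * (lam - 1) * q) * real (card (PiE A F))"
    using insert by auto
  define G where "G = PiE (A - {c}) F"
  have fF: "finite (F c)" unfolding Fdef by (rule finite_subset[of _ "Pow {..<m}"]) auto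
  have cardF: "card (F c) = m choose b c" unfolding Fdef using n_subsets[of "{..<m}" "b c"] by simp
  obtain y0 where y0: "y0 \<in> F c"
  proof -
    have "{..<b c} \<in> F c" unfolding Fdef using bm[OF cA] by auto
    then show ?thesis using that by blast
  qed
  have Dins: "Dsum J2 L (insert c K) S = Dsum J2 L K S + card (S c \<inter> Vv J2 L S c)" for S
    unfolding Dsum_def using cK insert(1) by simp
  have "(\<Sum>S\<in>PiE A F. lam ^ Dsum J2 L (insert c K) S)
      = (\<Sum>g\<in>G. \<Sum>y\<in>F c. lam ^ Dsum J2 L (insert c K) (g(c := y)))"
    unfolding G_def by (rule sum_PiE_split[OF fA cA])
  also have "\<dots> = (\<Sum>g\<in>G. lam ^ Dsum J2 L K (g(c := y0)) * (\<Sum>y\<in>F c. lam ^ card (y \<inter> Vv J2 L (g(c := y0)) c)))"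
    unfolding sum_distrib_left
  proof (intro sum.cong refl)
    fix g y
    show "lam ^ Dsum J2 L (insert c K) (g(c := y)) = lam ^ Dsum J2 L K (g(c := y0)) * lam ^ card (y \<inter> Vv J2 L (g(c := y0)) c)"
      using Dins[of "g(c := y)"] Dsum_upd[OF cL insert(2), of J2 g y] Dsum_upd[OF cL insert(2), of J2 g y0]
        Vv_upd_self[of J2 L g c y] Vv_upd_self[of J2 L g c y0]
      by (simp add: power_add)
  qed
  also have "\<dots> \<le> (\<Sum>g\<in>G. lam ^ Dsum J2 L K (g(c := y0)) * (real (m choose b c) * exp ((lam - 1) * q)))"
  proof (intro sum_mono mult_left_mono)
    fix g assume g: "g \<in> G"
    have gS: "g(c := y0) \<in> PiE A F"
      using PiE_fun_upd[of y0 F c g "A - {c}", OF y0] g cA unfolding G_def by (simp add: insert_absorb)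
    have "(\<Sum>y\<in>F c. lam ^ card (y \<inter> Vv J2 L (g(c := y0)) c))
        \<le> real (m choose b c) * exp ((lam - 1) * real (b c) * real (card (Vv J2 L (g(c := y0)) c \<inter> {..<m})) / real m)"
      unfolding Fdef using col_mgf[OF bm[OF cA] m0 lam] by simp
    also have "\<dots> \<le> real (m choose b c) * exp ((lam - 1) * q)"
    proof -
      have "(lam - 1) * (real (b c) * real (card (Vv J2 L (g(c := y0)) c \<inter> {..<m})) / real m) \<le> (lam - 1) * q"
        using qb[OF gS cL] lam by (intro mult_left_mono) auto
      then show ?thesis by (intro mult_left_mono) (auto simp: mult.assoc)
    qed
    finally show "(\<Sum>y\<in>F c. lam ^ card (y \<inter> Vv J2 L (g(c := y0)) c)) \<le> real (m choose b c) * exp ((lam - 1) * q)" .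
    show "0 \<le> lam ^ Dsum J2 L K (g(c := y0))" using lam by simp
  qed
  also have "\<dots> = exp ((lam - 1) * q) * (\<Sum>g\<in>G. \<Sum>y\<in>F c. lam ^ Dsum J2 L K (g(c := y)))"
    unfolding sum_distrib_left
    by (intro sum.cong refl) (simp add: Dsum_upd[OF cL insert(2)] cardF mult_ac)
  also have "(\<Sum>g\<in>G. \<Sum>y\<in>F c. lam ^ Dsum J2 L K (g(c := y))) = (\<Sum>S\<in>PiE A F. lam ^ Dsum J2 L K S)"
    unfolding G_def by (rule sum_PiE_split[OF fA cA, symmetric])
  also have "exp ((lam - 1) * q) * \<dots> \<le> exp ((lam - 1) * q) * (exp (real (card K) * (lam - 1) * q) * real (card (PiE A F)))"
    using IH by (intro mult_left_mono) auto
  also have "\<dots> = exp (real (card (insert c K)) * (lam - 1) * q) * real (card (PiE A F))"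
    using cK insert(1) by (simp add: exp_add[symmetric] algebra_simps)
  finally show ?case .
qed

lemma card_filter_sum:
  assumes "finite A"
  shows "card {x\<in>A. P x} = (\<Sum>x\<in>A. if P x then 1 else (0::nat))"
proof -
  have "card {x\<in>A. P x} = sum (\<lambda>_. 1::nat) {x\<in>A. P x}" by (rule card_eq_sum)
  also have "\<dots> = (\<Sum>x\<in>A. if P x then 1 else 0)" by (rule sum.inter_filter[OF assms])
  finally show ?thesis .
qed

lemma card_ind:
  fixes m :: nat
  assumes "X \<subseteq> {..<m}"
  shows "card X = (\<Sum>i<m. if i \<in> X then 1 else (0::nat))"
proof -
  have "card {i\<in>{..<m}. i \<in> X} = (\<Sum>i<m. if i \<in> X then 1 else (0::nat))"
    by (rule card_filter_sum) simp
  then have "(\<Sum>i<m. if i \<in> X then 1 else (0::nat)) = card {i\<in>{..<m}. i \<in> X}" by simp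
  also have "{i\<in>{..<m}. i \<in> X} = X" using assms by auto
  finally show ?thesis by simp
qed

lemma row_ineq:
  assumes fL: "finite L" and LJ1: "L \<subseteq> J1" and J1J2: "J1 \<subseteq> J2"
  shows "(\<Sum>j\<in>L. if i \<in> S j then 1 else (0::nat))
     \<le> (if (\<exists>j0\<in>J1. i \<in> S j0 \<and> (\<forall>j\<in>J2 - {j0}. i \<notin> S j)) then 1 else 0)
        + 2 * (\<Sum>j\<in>L. if i \<in> S j \<and> i \<in> Vv J2 L S j then 1 else 0)"
proof -
  define C where "C = {j\<in>L. i \<in> S j}"
  have fC: "finite C" using fL unfolding C_def by simp
  have lhs: "(\<Sum>j\<in>L. if i \<in> S j then 1 else (0::nat)) = card C"
    unfolding C_def using card_filter_sum[OF fL] by simp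
  define C' where "C' = {j\<in>L. i \<in> S j \<and> i \<in> Vv J2 L S j}"
  have rhs: "(\<Sum>j\<in>L. if i \<in> S j \<and> i \<in> Vv J2 L S j then 1 else (0::nat)) = card C'"
    unfolding C'_def using card_filter_sum[OF fL] by simp
  show ?thesis
  proof (cases "C = {}")
    case True then show ?thesis using lhs by simp
  next
    case False
    define j0 where "j0 = Min C"
    have j0C: "j0 \<in> C" using False fC unfolding j0_def by simp
    have j0min: "\<And>j. j \<in> C \<Longrightarrow> j0 \<le> j" using fC unfolding j0_def by simp
    have sub: "C - {j0} \<subseteq> C'"
    proof
      fix j assume j: "j \<in> C - {j0}"
      then have "j0 < j" using j0min by fastforce
      moreover have "j0 \<in> J2" "j0 \<in> L" "i \<in> S j0" using j0C LJ1 J1J2 unfolding C_def by auto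
      ultimately have "i \<in> Vv J2 L S j" unfolding Vv_def using j by auto
      then show "j \<in> C'" using j unfolding C_def C'_def by auto
    qed
    have fC': "finite C'" using fL unfolding C'_def by simp
    have c1: "card C - 1 \<le> card C'"
      using card_mono[OF fC' sub] card_Diff_singleton[OF j0C] by simp
    show ?thesis
    proof (cases "card C \<ge> 2")
      case True then show ?thesis using lhs rhs c1 by simp
    next
      case False
      have "card C \<noteq> 0" using \<open>C \<noteq> {}\<close> fC by simp
      then have cC: "card C = 1" using False by simp
      then have Ceq: "C = {j0}" using j0C fC by (metis card_1_singletonE singletonD)
      show ?thesis
      proof (cases "i \<in> Vv J2 L S j0")
        case True
        then have "j0 \<in> C'" using j0C unfolding C_def C'_def by auto
        then have "card C' \<ge> 1" using fC' by (metis One_nat_def Suc_leI card_gt_0_iff empty_iff)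
        then show ?thesis using lhs rhs cC by simp
      next
        case False
        have "\<forall>j\<in>J2 - {j0}. i \<notin> S j"
        proof (intro ballI notI)
          fix j assume j: "j \<in> J2 - {j0}" and ij: "i \<in> S j"
          show False
          proof (cases "j \<in> L")
            case True
            then have "j \<in> C" using ij unfolding C_def by simp
            then show False using Ceq j by auto
          next
            case nL: False
            then have "i \<in> Vv J2 L S j0" unfolding Vv_def using j ij by auto
            then show False using False by simp
          qed
        qed
        moreover have "j0 \<in> J1" "i \<in> S j0" using j0C LJ1 unfolding C_def by auto
        ultimately have "\<exists>j0\<in>J1. i \<in> S j0 \<and> (\<forall>j\<in>J2 - {j0}. i \<notin> S j)" by blast
        then show ?thesis using lhs cC by simp
      qed
    qed
  qed
qed

lemma det_ineq:
  assumes fL: "finite L" and LJ1: "L \<subseteq> J1" and J1J2: "J1 \<subseteq> J2"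
    and Ssub: "\<And>j. j \<in> J2 \<Longrightarrow> S j \<subseteq> {..<m}"
  shows "(\<Sum>j\<in>L. card (S j)) \<le> card {i\<in>{..<m}. \<exists>j0\<in>J1. i \<in> S j0 \<and> (\<forall>j\<in>J2 - {j0}. i \<notin> S j)}
           + 2 * Dsum J2 L L S"
proof -
  have LJ2: "\<And>j. j \<in> L \<Longrightarrow> S j \<subseteq> {..<m}" using LJ1 J1J2 Ssub by auto
  have "(\<Sum>j\<in>L. card (S j)) = (\<Sum>j\<in>L. \<Sum>i<m. if i \<in> S j then 1 else (0::nat))"
    by (intro sum.cong refl card_ind LJ2)
  also have "\<dots> = (\<Sum>i<m. \<Sum>j\<in>L. if i \<in> S j then 1 else (0::nat))" by (rule sum.swap)
  also have "\<dots> \<le> (\<Sum>i<m. (if (\<exists>j0\<in>J1. i \<in> S j0 \<and> (\<forall>j\<in>J2 - {j0}. i \<notin> S j)) then 1 else 0)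
        + 2 * (\<Sum>j\<in>L. if i \<in> S j \<and> i \<in> Vv J2 L S j then 1 else 0))"
    by (intro sum_mono row_ineq[OF fL LJ1 J1J2])
  also have "\<dots> = (\<Sum>i<m. if (\<exists>j0\<in>J1. i \<in> S j0 \<and> (\<forall>j\<in>J2 - {j0}. i \<notin> S j)) then 1 else 0)
        + 2 * (\<Sum>j\<in>L. \<Sum>i<m. if i \<in> S j \<inter> Vv J2 L S j then 1 else 0)"
  proof -
    have "(\<Sum>i<m. \<Sum>j\<in>L. if i \<in> S j \<and> i \<in> Vv J2 L S j then 1 else (0::nat))
        = (\<Sum>j\<in>L. \<Sum>i<m. if i \<in> S j \<inter> Vv J2 L S j then 1 else 0)"
      by (subst sum.swap) simp
    then show ?thesis by (simp only: sum.distrib sum_distrib_left[symmetric])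
  qed
  also have "(\<Sum>i<m. if (\<exists>j0\<in>J1. i \<in> S j0 \<and> (\<forall>j\<in>J2 - {j0}. i \<notin> S j)) then 1 else (0::nat))
      = card {i\<in>{..<m}. \<exists>j0\<in>J1. i \<in> S j0 \<and> (\<forall>j\<in>J2 - {j0}. i \<notin> S j)}"
    by (rule card_filter_sum[symmetric]) simp
  also have "(\<Sum>j\<in>L. \<Sum>i<m. if i \<in> S j \<inter> Vv J2 L S j then 1 else (0::nat)) = Dsum J2 L L S"
    unfolding Dsum_def using LJ2 by (intro sum.cong refl card_ind[symmetric]) auto
  finally show ?thesis .
qed



definition psi :: "nat \<Rightarrow> nat \<Rightarrow> (nat \<Rightarrow> nat set) \<Rightarrow> (nat \<times> nat \<Rightarrow> bool)" where
  "psi m1 m2 S = (\<lambda>(i, j). i < m1 \<and> j < m2 \<and> i \<in> S j)"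

lemma prod_col:
  fixes p :: real
  assumes "X \<subseteq> {..<m1}"
  shows "(\<Prod>i<m1. if i \<in> X then p else 1 - p) = p ^ card X * (1 - p) ^ (m1 - card X)"
proof -
  have "(\<Prod>i<m1. if i \<in> X then p else 1 - p)
      = (\<Prod>i\<in>{..<m1} \<inter> {i. i \<in> X}. p) * (\<Prod>i\<in>{..<m1} \<inter> - {i. i \<in> X}. 1 - p)"
    by (rule prod.If_cases) simp
  also have "{..<m1} \<inter> {i. i \<in> X} = X" using assms by auto
  also have "{..<m1} \<inter> - {i. i \<in> X} = {..<m1} - X" by auto
  finally have e: "(\<Prod>i<m1. if i \<in> X then p else 1 - p) = p ^ card X * (1 - p) ^ card ({..<m1} - X)" by simp
  have "card ({..<m1} - X) = m1 - card X"
    using assms by (simp add: card_Diff_subset finite_subset)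
  with e show ?thesis by simp
qed

lemma prob_count:
  fixes p :: real
  assumes p: "0 < p" "p < 1" and bm: "\<forall>j<m2. b j \<le> m1"
    and Fdef: "F = (\<lambda>j. {X. X \<subseteq> {..<m1} \<and> card X = b j})"
  shows "measure_pmf.prob (bern_matrix m1 m2 p) (Y \<inter> Omega_b m1 m2 b)
    = (\<Prod>j<m2. p ^ b j * (1 - p) ^ (m1 - b j)) * real (card {S \<in> PiE {..<m2} F. psi m1 m2 S \<in> Y})"
proof -
  define P where "P = bern_matrix m1 m2 p"
  define G where "G = {..<m1} \<times> {..<m2}"
  define Ms where "Ms = {A::nat\<times>nat\<Rightarrow>bool. \<forall>x. x \<notin> G \<longrightarrow> A x = False}"
  define w where "w = (\<Prod>j<m2. p ^ b j * (1 - p) ^ (m1 - b j))"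
  define PS where "PS = PiE {..<m2} F"
  have fG: "finite G" unfolding G_def by simp
  have PPi: "P = Pi_pmf G False (\<lambda>_. bernoulli_pmf p)" unfolding P_def bern_matrix_def G_def ..
  have setP: "set_pmf P \<subseteq> Ms" unfolding PPi Ms_def by (rule set_Pi_pmf_subset[OF fG])
  have Fsub: "\<And>S j. S \<in> PS \<Longrightarrow> j < m2 \<Longrightarrow> S j \<subseteq> {..<m1} \<and> card (S j) = b j"
    unfolding PS_def Fdef by (auto simp: PiE_iff)
  have colpsi: "col_supp m1 (psi m1 m2 S) j = S j" if "S \<in> PS" "j < m2" for S j
    using Fsub[OF that] that unfolding col_supp_def psi_def by auto
  have img: "Omega_b m1 m2 b \<inter> Ms = psi m1 m2 ` PS"
  proof
    show "psi m1 m2 ` PS \<subseteq> Omega_b m1 m2 b \<inter> Ms"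
    proof (rule image_subsetI, rule IntI)
      fix S assume S: "S \<in> PS"
      show "psi m1 m2 S \<in> Omega_b m1 m2 b"
        unfolding Omega_b_def using colpsi[OF S] Fsub[OF S] by auto
      show "psi m1 m2 S \<in> Ms" unfolding Ms_def G_def psi_def by auto
    qed
  next
    show "Omega_b m1 m2 b \<inter> Ms \<subseteq> psi m1 m2 ` PS"
    proof
      fix A assume A: "A \<in> Omega_b m1 m2 b \<inter> Ms"
      define S where "S = restrict (col_supp m1 A) {..<m2}"
      have "S \<in> PS" unfolding S_def PS_def Fdef using A
        by (auto simp: Omega_b_def col_supp_def)
      moreover have "psi m1 m2 S = A"
      proof
        fix x :: "nat \<times> nat"
        obtain i j where x: "x = (i, j)" by (cases x)
        show "psi m1 m2 S x = A x"
          using A unfolding x psi_def S_def col_supp_def Ms_def G_def by auto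
      qed
      ultimately show "A \<in> psi m1 m2 ` PS" by blast
    qed
  qed
  have inj: "inj_on (psi m1 m2) PS"
  proof
    fix S S' assume S: "S \<in> PS" and S': "S' \<in> PS" and e: "psi m1 m2 S = psi m1 m2 S'"
    show "S = S'"
    proof (rule PiE_ext[OF S[unfolded PS_def] S'[unfolded PS_def]])
      fix j assume j: "j \<in> {..<m2}"
      have "col_supp m1 (psi m1 m2 S) j = col_supp m1 (psi m1 m2 S') j" using e by simp
      then show "S j = S' j" using colpsi S S' j by simp
    qed
  qed
  have fPS: "finite PS" unfolding PS_def Fdef
    by (intro finite_PiE) (auto intro: finite_subset[of _ "Pow {..<m1}"])
  have pmfw: "pmf P (psi m1 m2 S) = w" if S: "S \<in> PS" for S
  proof -
    have out: "\<forall>x. x \<notin> G \<longrightarrow> psi m1 m2 S x = False" unfolding G_def psi_def by auto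
    have "pmf P (psi m1 m2 S) = (\<Prod>x\<in>G. pmf (bernoulli_pmf p) (psi m1 m2 S x))"
      unfolding PPi using pmf_Pi[OF fG, of False "\<lambda>_. bernoulli_pmf p" "psi m1 m2 S"] out by simp
    also have "\<dots> = (\<Prod>i<m1. \<Prod>j<m2. pmf (bernoulli_pmf p) (psi m1 m2 S (i, j)))"
      unfolding G_def by (simp add: prod.cartesian_product)
    also have "\<dots> = (\<Prod>j<m2. \<Prod>i<m1. pmf (bernoulli_pmf p) (psi m1 m2 S (i, j)))"
      by (rule prod.swap)
    also have "\<dots> = (\<Prod>j<m2. \<Prod>i<m1. if i \<in> S j then p else 1 - p)"
      using p by (intro prod.cong refl) (simp add: psi_def)
    also have "\<dots> = w" unfolding w_def
      using Fsub[OF S] by (intro prod.cong refl) (simp add: prod_col)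
    finally show ?thesis .
  qed
  define Q where "Q = {S \<in> PS. psi m1 m2 S \<in> Y}"
  have Yeq: "Y \<inter> Omega_b m1 m2 b \<inter> Ms = psi m1 m2 ` Q" using img unfolding Q_def by auto
  have "measure_pmf.prob P (Y \<inter> Omega_b m1 m2 b) = measure_pmf.prob P (Y \<inter> Omega_b m1 m2 b \<inter> set_pmf P)"
    by (rule measure_Int_set_pmf[symmetric])
  also have "Y \<inter> Omega_b m1 m2 b \<inter> set_pmf P = (Y \<inter> Omega_b m1 m2 b \<inter> Ms) \<inter> set_pmf P"
    using setP by auto
  also have "measure_pmf.prob P \<dots> = measure_pmf.prob P (psi m1 m2 ` Q)"
    unfolding Yeq by (rule measure_Int_set_pmf)
  also have "\<dots> = sum (pmf P) (psi m1 m2 ` Q)"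
    by (rule measure_measure_pmf_finite) (use fPS in \<open>simp add: Q_def\<close>)
  also have "\<dots> = (\<Sum>S\<in>Q. pmf P (psi m1 m2 S))"
  proof -
    have "inj_on (psi m1 m2) Q" using inj by (rule inj_on_subset) (auto simp: Q_def)
    then show ?thesis by (simp add: sum.reindex)
  qed
  also have "\<dots> = (\<Sum>S\<in>Q. w)" by (intro sum.cong refl) (simp add: Q_def pmfw)
  also have "\<dots> = w * real (card Q)" by simp
  finally show ?thesis unfolding P_def Q_def w_def PS_def .
qed

lemma exp_3_powr: "t \<ge> 0 \<Longrightarrow> exp t * 3 powr (- t) \<le> (1::real)"
proof -
  assume t: "t \<ge> 0"
  have "ln (exp 1) \<le> ln (3::real)" using exp_le by (subst ln_le_cancel_iff) auto
  then have l3: "1 \<le> ln (3::real)" by simp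
  have "exp t * 3 powr (- t) = exp (t - t * ln 3)" by (simp add: powr_def exp_diff exp_minus divide_inverse)
  also have "\<dots> \<le> exp 0" using t l3 by (intro exp_le_cancel_iff[THEN iffD2]) (simp add: mult_left_mono[of 1 "ln 3" t, simplified])
  finally show ?thesis by simp
qed

theorem lemma4p7:
  "\<exists>C::real. C > 1 \<and>
    (\<forall>(m1::nat) (m2::nat) (p::real) (b::nat \<Rightarrow> nat) (J1::nat set) (J2::nat set) (r::real).
      0 < p \<and> p < 1 \<and> (\<forall>j<m2. b j \<le> m1) \<and>
      J1 \<noteq> {} \<and> J1 \<subseteq> J2 \<and> J2 \<subseteq> {..<m2} \<and> r > 0 \<and>
      real (card {j \<in> J1. real (b j) \<ge> r}) \<ge> real (card J1) / 2 \<and>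
      r \<ge> real (card J2) * (24 * real (bnorm_inf m2 b) ^ 2 / real m1)
      \<longrightarrow>
      cond_prob (bern_matrix m1 m2 p)
        {A. real (card (I_A m1 A J1 J2)) < real (card J1) * r / 4}
        (Omega_b m1 m2 b)
      \<le> C powr (real (card J1) / 2) *
         exp (- ln (r / (24 * real (card J2) * real (bnorm_inf m2 b) ^ 2 / real m1))
              * r * real (card J1) / 8))"
proof (rule exI[of _ 2], intro conjI allI impI)
  show "(2::real) > 1" by simp
  fix m1 m2 :: nat and p :: real and b :: "nat \<Rightarrow> nat" and J1 J2 :: "nat set" and r :: real
  assume H: "0 < p \<and> p < 1 \<and> (\<forall>j<m2. b j \<le> m1) \<and>
      J1 \<noteq> {} \<and> J1 \<subseteq> J2 \<and> J2 \<subseteq> {..<m2} \<and> r > 0 \<and>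
      real (card {j \<in> J1. real (b j) \<ge> r}) \<ge> real (card J1) / 2 \<and>
      r \<ge> real (card J2) * (24 * real (bnorm_inf m2 b) ^ 2 / real m1)"
  then have p: "0 < p" "p < 1" and bm1: "\<forall>j<m2. b j \<le> m1" and J1ne: "J1 \<noteq> {}"
    and J12: "J1 \<subseteq> J2" and J2m: "J2 \<subseteq> {..<m2}" and r0: "r > 0"
    and Lbig: "real (card {j \<in> J1. real (b j) \<ge> r}) \<ge> real (card J1) / 2"
    and rbig: "r \<ge> real (card J2) * (24 * real (bnorm_inf m2 b) ^ 2 / real m1)" by auto
  define k where "k = card J1"
  define n where "n = card J2"
  define bm where "bm = bnorm_inf m2 b"
  define L where "L = {j \<in> J1. real (b j) \<ge> r}"
  have fJ2: "finite J2" using J2m finite_subset by blast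
  have fJ1: "finite J1" using J12 fJ2 finite_subset by blast
  have fL: "finite L" using fJ1 unfolding L_def by simp
  have LJ1: "L \<subseteq> J1" unfolding L_def by auto
  have k0: "k > 0" using J1ne fJ1 unfolding k_def by auto
  have cardL: "real (card L) \<ge> real k / 2" using Lbig unfolding L_def k_def .
  have cardLk: "card L \<le> k" unfolding k_def using card_mono[OF fJ1 LJ1] .
  have "card L > 0" using cardL k0 by (cases "card L = 0") auto
  then obtain j1 where j1: "j1 \<in> L" by (metis card_gt_0_iff ex_in_conv)
  have j1m2: "j1 < m2" using j1 LJ1 J12 J2m by auto
  have bj1: "real (b j1) \<ge> r" using j1 unfolding L_def by auto
  have bmge: "\<And>j. j < m2 \<Longrightarrow> b j \<le> bm"
    unfolding bm_def bnorm_inf_def by (intro Max_ge) auto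
  have m1pos: "m1 > 0" using bj1 r0 bm1 j1m2 by (cases m1) force+
  have bmr: "real bm \<ge> r" using bmge[OF j1m2] bj1 by linarith
  have n0: "n > 0" using J1ne J12 fJ2 unfolding n_def by (auto simp: card_gt_0_iff)
  define q where "q = real n * real bm ^ 2 / real m1"
  have q0: "q > 0" unfolding q_def using n0 bmr r0 m1pos by auto
  define x where "x = r / (24 * q)"
  have q24: "24 * q \<le> r" using rbig unfolding q_def n_def bm_def by (simp add: algebra_simps)
  have x1: "x \<ge> 1" unfolding x_def using q24 q0 by (simp add: le_divide_eq)
  have xeq: "r / (24 * real (card J2) * real (bnorm_inf m2 b) ^ 2 / real m1) = x"
    unfolding x_def q_def n_def bm_def by (simp add: field_simps)
  define lam where "lam = 3 * x"
  have lam1: "lam \<ge> 1" unfolding lam_def using x1 by simp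
  define t where "t = real k * r / 8"
  have t0: "t \<ge> 0" unfolding t_def using r0 by simp
  have lamqt: "real k * lam * q = t" unfolding lam_def x_def t_def using q0 by (simp add: field_simps)
  define F where "F = (\<lambda>j. {X. X \<subseteq> {..<m1} \<and> card X = b j})"
  define PS where "PS = PiE {..<m2} F"
  define E where "E = {A. real (card (I_A m1 A J1 J2)) < real (card J1) * r / 4}"
  define Q where "Q = {S \<in> PS. psi m1 m2 S \<in> E}"
  define w where "w = (\<Prod>j<m2. p ^ b j * (1 - p) ^ (m1 - b j))"
  have w0: "w > 0" unfolding w_def using p by (intro prod_pos) auto
  have fPS: "finite PS" unfolding PS_def F_def
    by (intro finite_PiE) (auto intro: finite_subset[of _ "Pow {..<m1}"])
  have PSne: "PS \<noteq> {}" unfolding PS_def PiE_eq_empty_iff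
  proof
    assume "\<exists>i\<in>{..<m2}. F i = {}"
    then obtain i where i: "i < m2" "F i = {}" by auto
    have "{..<b i} \<in> F i" unfolding F_def using bm1 i by auto
    then show False using i by auto
  qed
  have N0: "card PS > 0" using fPS PSne by (simp add: card_gt_0_iff)
  have Fsub: "\<And>S j. S \<in> PS \<Longrightarrow> j < m2 \<Longrightarrow> S j \<subseteq> {..<m1} \<and> card (S j) = b j"
    unfolding PS_def F_def by (auto simp: PiE_iff)
  have num: "measure_pmf.prob (bern_matrix m1 m2 p) (E \<inter> Omega_b m1 m2 b) = w * real (card Q)"
    unfolding w_def Q_def PS_def by (rule prob_count[OF p bm1 F_def])
  have den: "measure_pmf.prob (bern_matrix m1 m2 p) (Omega_b m1 m2 b) = w * real (card PS)"
    using prob_count[OF p bm1 F_def, of UNIV] unfolding w_def PS_def by simp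
  have cond: "cond_prob (bern_matrix m1 m2 p) E (Omega_b m1 m2 b) = real (card Q) / real (card PS)"
    unfolding cond_prob_def num den using w0 by simp
  have Dbig: "real (Dsum J2 L L S) > t" if S: "S \<in> Q" for S
  proof -
    have SPS: "S \<in> PS" using S unfolding Q_def by auto
    have Ssub: "\<And>j. j \<in> J2 \<Longrightarrow> S j \<subseteq> {..<m1}" using Fsub[OF SPS] J2m by auto
    have Ieq: "I_A m1 (psi m1 m2 S) J1 J2 = {i\<in>{..<m1}. \<exists>j0\<in>J1. i \<in> S j0 \<and> (\<forall>j\<in>J2 - {j0}. i \<notin> S j)}"
      unfolding I_A_def psi_def using J12 J2m by auto
    have det: "(\<Sum>j\<in>L. card (S j)) \<le> card (I_A m1 (psi m1 m2 S) J1 J2) + 2 * Dsum J2 L L S"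
      unfolding Ieq by (rule det_ineq[OF fL LJ1 J12 Ssub])
    have "real (card L) * r \<le> (\<Sum>j\<in>L. real (card (S j)))"
    proof -
      have "(\<Sum>j\<in>L. r) \<le> (\<Sum>j\<in>L. real (card (S j)))"
      proof (intro sum_mono)
        fix j assume j: "j \<in> L"
        then have "j < m2" using LJ1 J12 J2m by auto
        then show "r \<le> real (card (S j))" using Fsub[OF SPS] j unfolding L_def by auto
      qed
      then show ?thesis by simp
    qed
    moreover have "real k * r / 2 \<le> real (card L) * r" using cardL r0
      by (simp add: field_simps mult_right_mono)
    moreover have "real (card (I_A m1 (psi m1 m2 S) J1 J2)) < real k * r / 4"
      using S unfolding Q_def E_def k_def by auto
    moreover have "(\<Sum>j\<in>L. real (card (S j))) \<le> real (card (I_A m1 (psi m1 m2 S) J1 J2)) + 2 * real (Dsum J2 L L S)"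
    proof -
      have "real (\<Sum>j\<in>L. card (S j)) \<le> real (card (I_A m1 (psi m1 m2 S) J1 J2) + 2 * Dsum J2 L L S)"
        using det by (simp only: of_nat_le_iff)
      then show ?thesis by simp
    qed
    ultimately show ?thesis unfolding t_def by linarith
  qed
  have markov: "real (card Q) \<le> (\<Sum>S\<in>PS. lam ^ Dsum J2 L L S) / lam powr t"
  proof -
    have lp: "lam powr t > 0" using lam1 by simp
    have "real (card Q) = (\<Sum>S\<in>Q. 1)" by simp
    also have "\<dots> \<le> (\<Sum>S\<in>Q. lam ^ Dsum J2 L L S / lam powr t)"
    proof (intro sum_mono)
      fix S assume S: "S \<in> Q"
      have "lam powr t \<le> lam powr real (Dsum J2 L L S)"
        using Dbig[OF S] lam1 by (intro powr_mono) auto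
      also have "\<dots> = lam ^ Dsum J2 L L S" using lam1 by (simp add: powr_realpow)
      finally show "1 \<le> lam ^ Dsum J2 L L S / lam powr t" using lp by simp
    qed
    also have "\<dots> \<le> (\<Sum>S\<in>PS. lam ^ Dsum J2 L L S / lam powr t)"
      using fPS lam1 by (intro sum_mono2) (auto simp: Q_def)
    also have "\<dots> = (\<Sum>S\<in>PS. lam ^ Dsum J2 L L S) / lam powr t"
      by (simp add: sum_divide_distrib)
    finally show ?thesis .
  qed
  have qb: "real (b c) * real (card (Vv J2 L S c \<inter> {..<m1})) / real m1 \<le> q"
    if S: "S \<in> PS" and c: "c \<in> L" for S c
  proof -
    have cm: "c < m2" using c LJ1 J12 J2m by auto
    have "card (Vv J2 L S c \<inter> {..<m1}) \<le> card (Vv J2 L S c)"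
    proof (rule card_mono)
      show "finite (Vv J2 L S c)" unfolding Vv_def using fJ2 Fsub[OF S] J2m
        by (intro finite_UN_I) (auto intro: finite_subset)
    qed auto
    also have "card (Vv J2 L S c) \<le> (\<Sum>j'\<in>{j'\<in>J2. j' \<noteq> c \<and> (j' \<notin> L \<or> j' < c)}. card (S j'))"
      unfolding Vv_def by (rule card_UN_le) (use fJ2 in simp)
    also have "\<dots> \<le> (\<Sum>j'\<in>J2. card (S j'))" using fJ2 by (intro sum_mono2) auto
    also have "\<dots> \<le> (\<Sum>j'\<in>J2. bm)"
      using Fsub[OF S] J2m bmge by (intro sum_mono) auto
    also have "\<dots> = n * bm" unfolding n_def by simp
    finally have cv: "real (card (Vv J2 L S c \<inter> {..<m1})) \<le> real n * real bm"
      by (metis of_nat_le_iff of_nat_mult)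
    have "real (b c) * real (card (Vv J2 L S c \<inter> {..<m1})) \<le> real bm * (real n * real bm)"
      using bmge[OF cm] cv by (intro mult_mono) auto
    then show ?thesis unfolding q_def using m1pos by (simp add: field_simps power2_eq_square)
  qed
  have mgf: "(\<Sum>S\<in>PS. lam ^ Dsum J2 L L S) \<le> exp (real (card L) * (lam - 1) * q) * real (card PS)"
    unfolding PS_def
    by (rule mgf_induct[where b=b and m=m1]) (use J2m J12 LJ1 bm1 m1pos lam1 qb fL in \<open>auto simp: F_def PS_def\<close>)
  have "exp (real (card L) * (lam - 1) * q) \<le> exp t"
  proof -
    have "real (card L) * (lam - 1) * q \<le> real k * lam * q"
      using cardLk q0 lam1 by (intro mult_right_mono mult_mono) auto
    then show ?thesis using lamqt by simp
  qed
  then have mgf2: "(\<Sum>S\<in>PS. lam ^ Dsum J2 L L S) \<le> exp t * real (card PS)"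
    using mgf N0 by (meson mult_right_mono of_nat_0_le_iff order_trans)
  have "real (card Q) / real (card PS) \<le> exp t / lam powr t"
  proof -
    have "real (card Q) \<le> exp t * real (card PS) / lam powr t"
      using markov mgf2 lam1 by (meson divide_right_mono order_trans powr_ge_zero)
    then show ?thesis using N0 by (simp add: field_simps)
  qed
  also have "exp t / lam powr t = (exp t * 3 powr (- t)) * x powr (- t)"
    unfolding lam_def using x1 by (simp add: powr_mult powr_minus divide_inverse)
  also have "\<dots> \<le> 1 * x powr (- t)"
    using exp_3_powr[OF t0] by (intro mult_right_mono) auto
  also have "\<dots> \<le> 2 powr (real k / 2) * x powr (- t)"
    using k0 by (intro mult_right_mono ge_one_powr_ge_zero) auto
  also have "x powr (- t) = exp (- ln x * r * real k / 8)"
    using x1 unfolding t_def powr_def by simp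
  finally show "cond_prob (bern_matrix m1 m2 p)
        {A. real (card (I_A m1 A J1 J2)) < real (card J1) * r / 4}
        (Omega_b m1 m2 b)
      \<le> 2 powr (real (card J1) / 2) *
         exp (- ln (r / (24 * real (card J2) * real (bnorm_inf m2 b) ^ 2 / real m1))
              * r * real (card J1) / 8)"
    using cond unfolding xeq E_def k_def by simp
qed

end
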